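(* Let $(G,\oplus)$ be a gyrogroup and let $S\subseteq G\setminus\{e\}$ be symmetric such that $\mathrm{gyr}[g,g'](S)=S$ for all $g,g'\in G$. Then the R-Cayley graph $\mathrm{RCay}(G,S)$ is vertex-transitive.
   Context: A gyrogroup is a nonempty set $G$ with a binary operation $\oplus$ such that: (i) there is a unique $e\in G$ with $e\oplus x=x=x\oplus e$ for all $x$; (ii) each $x\in G$ has a unique inverse $\ominus x$ with $\ominus x\oplus x=e=x\oplus(\ominus x)$; (iii) for all $x,y\in G$ there is an automorphism $\mathrm{gyr}[x,y]$ of $(G,\oplus)$ with $x\oplus(y\oplus z)=(x\oplus y)\oplus \mathrm{gyr}[x,y](z)$ for all $z\in G$; (iv) $\mathrm{gyr}[x\oplus y,y]=\mathrm{gyr}[x,y]$ for all $x,y$. A subset $S\subseteq G$ is symmetric if $\ominus s\in S$ for every $s\in S$. For $S\subseteq G$ with $e\notin S$, the R-Cayley graph $\mathrm{RCay}(G,S)$ is the directed graph with vertex set $G$ and a directed edge $u\to v$ iff $v=u\oplus s$ for some $s\in S$. A (directed) graph is (vertex-)transitive if for any two vertices $u,v$ there is a graph automorphism (a bijection of vertices preserving directed edges in both directions) sending $u$ to $v$. *)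

theory Defs
  imports Main
begin

text \<open>The gyration map gyr x y is carried as an explicit parameter, required to satisfy
  axioms (iii) and (iv); by left cancellation it is uniquely determined by op.\<close>

definition gyro_ident :: "'a set \<Rightarrow> ('a \<Rightarrow> 'a \<Rightarrow> 'a) \<Rightarrow> 'a" where
  "gyro_ident G op = (THE e. e \<in> G \<and> (\<forall>x\<in>G. op e x = x \<and> op x e = x))"

definition gyro_inv :: "'a set \<Rightarrow> ('a \<Rightarrow> 'a \<Rightarrow> 'a) \<Rightarrow> 'a \<Rightarrow> 'a" where
  "gyro_inv G op x = (THE y. y \<in> G \<and> op y x = gyro_ident G op \<and> op x y = gyro_ident G op)"

definition gyro_aut :: "'a set \<Rightarrow> ('a \<Rightarrow> 'a \<Rightarrow> 'a) \<Rightarrow> ('a \<Rightarrow> 'a) \<Rightarrow> bool" where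
  "gyro_aut G op f \<longleftrightarrow> bij_betw f G G \<and> (\<forall>a\<in>G. \<forall>b\<in>G. f (op a b) = op (f a) (f b))"

definition gyrogroup :: "'a set \<Rightarrow> ('a \<Rightarrow> 'a \<Rightarrow> 'a) \<Rightarrow> ('a \<Rightarrow> 'a \<Rightarrow> 'a \<Rightarrow> 'a) \<Rightarrow> bool" where
  "gyrogroup G op gyr \<longleftrightarrow>
     G \<noteq> {} \<and>
     (\<forall>x\<in>G. \<forall>y\<in>G. op x y \<in> G) \<and>
     (\<exists>!e. e \<in> G \<and> (\<forall>x\<in>G. op e x = x \<and> op x e = x)) \<and>
     (\<forall>x\<in>G. \<exists>!y. y \<in> G \<and> op y x = gyro_ident G op \<and> op x y = gyro_ident G op) \<and>
     (\<forall>x\<in>G. \<forall>y\<in>G. gyro_aut G op (gyr x y) \<and>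
        (\<forall>z\<in>G. op x (op y z) = op (op x y) (gyr x y z))) \<and>
     (\<forall>x\<in>G. \<forall>y\<in>G. \<forall>z\<in>G. gyr (op x y) y z = gyr x y z)"

definition gyro_symmetric :: "'a set \<Rightarrow> ('a \<Rightarrow> 'a \<Rightarrow> 'a) \<Rightarrow> 'a set \<Rightarrow> bool" where
  "gyro_symmetric G op S \<longleftrightarrow> (\<forall>s\<in>S. gyro_inv G op s \<in> S)"

definition rcay_edge :: "'a set \<Rightarrow> ('a \<Rightarrow> 'a \<Rightarrow> 'a) \<Rightarrow> 'a set \<Rightarrow> 'a \<Rightarrow> 'a \<Rightarrow> bool" where
  "rcay_edge G op S u v \<longleftrightarrow> u \<in> G \<and> v \<in> G \<and> (\<exists>s\<in>S. v = op u s)"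

definition digraph_aut :: "'a set \<Rightarrow> ('a \<Rightarrow> 'a \<Rightarrow> bool) \<Rightarrow> ('a \<Rightarrow> 'a) \<Rightarrow> bool" where
  "digraph_aut V E f \<longleftrightarrow> bij_betw f V V \<and> (\<forall>x\<in>V. \<forall>y\<in>V. E x y \<longleftrightarrow> E (f x) (f y))"

definition vertex_transitive :: "'a set \<Rightarrow> ('a \<Rightarrow> 'a \<Rightarrow> bool) \<Rightarrow> bool" where
  "vertex_transitive V E \<longleftrightarrow> (\<forall>u\<in>V. \<forall>v\<in>V. \<exists>f. digraph_aut V E f \<and> f u = v)"

end

theory Submission
  imports Defs
begin

locale gg =
  fixes G :: "'a set" and op :: "'a \<Rightarrow> 'a \<Rightarrow> 'a" and gyr :: "'a \<Rightarrow> 'a \<Rightarrow> 'a \<Rightarrow> 'a"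
  assumes gg: "gyrogroup G op gyr"
begin

definition "e = gyro_ident G op"
definition "iv x = gyro_inv G op x"

lemma ax:
  "\<forall>x\<in>G. \<forall>y\<in>G. op x y \<in> G"
  "\<exists>!e. e \<in> G \<and> (\<forall>x\<in>G. op e x = x \<and> op x e = x)"
  "\<forall>x\<in>G. \<exists>!y. y \<in> G \<and> op y x = gyro_ident G op \<and> op x y = gyro_ident G op"
  "\<forall>x\<in>G. \<forall>y\<in>G. gyro_aut G op (gyr x y) \<and>
        (\<forall>z\<in>G. op x (op y z) = op (op x y) (gyr x y z))"
  "\<forall>x\<in>G. \<forall>y\<in>G. \<forall>z\<in>G. gyr (op x y) y z = gyr x y z"
  using gg unfolding gyrogroup_def by simp_all

lemma closed: "x \<in> G \<Longrightarrow> y \<in> G \<Longrightarrow> op x y \<in> G"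
  using ax(1) by blast

lemma e_props: "e \<in> G \<and> (\<forall>x\<in>G. op e x = x \<and> op x e = x)"
  unfolding e_def gyro_ident_def by (rule theI'[OF ax(2)])

lemma iv_props: "x \<in> G \<Longrightarrow> iv x \<in> G \<and> op (iv x) x = e \<and> op x (iv x) = e"
proof -
  assume x: "x \<in> G"
  have "\<exists>!y. y \<in> G \<and> op y x = gyro_ident G op \<and> op x y = gyro_ident G op"
    using ax(3) x by (rule bspec)
  then show ?thesis unfolding iv_def gyro_inv_def e_def by (rule theI')
qed

lemma gyr_assoc: "x \<in> G \<Longrightarrow> y \<in> G \<Longrightarrow> z \<in> G \<Longrightarrow> op x (op y z) = op (op x y) (gyr x y z)"
  using ax(4) by blast

lemma gyr_aut: "x \<in> G \<Longrightarrow> y \<in> G \<Longrightarrow> gyro_aut G op (gyr x y)"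
  using ax(4) by blast

lemma gyr_loop: "x \<in> G \<Longrightarrow> y \<in> G \<Longrightarrow> z \<in> G \<Longrightarrow> gyr (op x y) y z = gyr x y z"
  using ax(5) by blast

lemma gyr_in: "x \<in> G \<Longrightarrow> y \<in> G \<Longrightarrow> z \<in> G \<Longrightarrow> gyr x y z \<in> G"
proof -
  assume "x \<in> G" "y \<in> G" "z \<in> G"
  then have "bij_betw (gyr x y) G G" using gyr_aut unfolding gyro_aut_def by blast
  then show ?thesis using \<open>z \<in> G\<close> bij_betwE by blast
qed

lemma cancel:
  assumes a: "a \<in> G" and b: "b \<in> G" and c: "c \<in> G" and eq: "op a b = op a c"
  shows "b = c"
proof -
  have ia: "iv a \<in> G" "op (iv a) a = e" using iv_props a by auto
  have "op (iv a) (op a b) = gyr (iv a) a b"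
    using gyr_assoc[OF ia(1) a b] ia e_props gyr_in[OF ia(1) a b] by simp
  moreover have "op (iv a) (op a c) = gyr (iv a) a c"
    using gyr_assoc[OF ia(1) a c] ia e_props gyr_in[OF ia(1) a c] by simp
  ultimately have "gyr (iv a) a b = gyr (iv a) a c" using eq by simp
  moreover have "inj_on (gyr (iv a) a) G"
    using gyr_aut[OF ia(1) a] unfolding gyro_aut_def bij_betw_def by blast
  ultimately show ?thesis using b c by (meson inj_onD)
qed

lemma gyr_e: assumes x: "x \<in> G" and z: "z \<in> G" shows "gyr e x z = z"
proof -
  have "op e (op x z) = op (op e x) (gyr e x z)"
    using gyr_assoc e_props x z by blast
  then have "op x z = op x (gyr e x z)" using e_props x z closed by simp
  then show ?thesis using cancel[OF x z gyr_in[OF _ x z]] e_props by metis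
qed

lemma left_inv: assumes a: "a \<in> G" and y: "y \<in> G" shows "op a (op (iv a) y) = y"
proof -
  have ia: "iv a \<in> G" "op a (iv a) = e" using iv_props a by auto
  have "op a (op (iv a) y) = op e (gyr a (iv a) y)"
    using gyr_assoc[OF a ia(1) y] ia by simp
  also have "\<dots> = gyr a (iv a) y" using e_props gyr_in[OF a ia(1) y] by simp
  also have "\<dots> = gyr e (iv a) y" using gyr_loop[OF a ia(1) y] ia by simp
  also have "\<dots> = y" using gyr_e ia y by simp
  finally show ?thesis .
qed

lemma transl_aut:
  assumes a: "a \<in> G" and Sg: "S \<subseteq> G" and inv: "\<forall>g\<in>G. \<forall>g'\<in>G. gyr g g' ` S = S"
  shows "digraph_aut G (rcay_edge G op S) (op a)"
proof -
  have bij: "bij_betw (op a) G G"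
  proof (rule bij_betw_imageI)
    show "inj_on (op a) G" using cancel a by (meson inj_onI)
    show "op a ` G = G"
    proof
      show "op a ` G \<subseteq> G" using closed a by blast
      show "G \<subseteq> op a ` G"
      proof
        fix y assume y: "y \<in> G"
        have "op (iv a) y \<in> G" using closed iv_props a y by blast
        then show "y \<in> op a ` G" using left_inv[OF a y] by force
      qed
    qed
  qed
  have edge: "rcay_edge G op S x y \<longleftrightarrow> rcay_edge G op S (op a x) (op a y)"
    if x: "x \<in> G" and y: "y \<in> G" for x y
  proof
    assume "rcay_edge G op S x y"
    then obtain s where s: "s \<in> S" "y = op x s" unfolding rcay_edge_def by blast
    have "op a y = op (op a x) (gyr a x s)" using gyr_assoc a x s Sg by blast
    moreover have "gyr a x s \<in> S" using inv a x s by blast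
    ultimately show "rcay_edge G op S (op a x) (op a y)"
      unfolding rcay_edge_def using closed a x y by blast
  next
    assume "rcay_edge G op S (op a x) (op a y)"
    then obtain t where t: "t \<in> S" "op a y = op (op a x) t" unfolding rcay_edge_def by blast
    then obtain s where s: "s \<in> S" "t = gyr a x s" using inv a x by blast
    have "op a y = op a (op x s)" using gyr_assoc a x s Sg t by auto
    then have "y = op x s" using cancel a y closed x s Sg by blast
    then show "rcay_edge G op S x y" unfolding rcay_edge_def using x y s by blast
  qed
  show ?thesis unfolding digraph_aut_def using bij edge by blast
qed

end

lemma digraph_aut_comp:
  "digraph_aut V E f \<Longrightarrow> digraph_aut V E g \<Longrightarrow> digraph_aut V E (f \<circ> g)"
proof -
  assume f: "digraph_aut V E f" and g: "digraph_aut V E g"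
  have bf: "bij_betw f V V" and bg: "bij_betw g V V" using f g unfolding digraph_aut_def by auto
  have "bij_betw (f \<circ> g) V V" using bij_betw_trans[OF bg bf] .
  moreover have "\<forall>x\<in>V. \<forall>y\<in>V. E x y \<longleftrightarrow> E ((f \<circ> g) x) ((f \<circ> g) y)"
  proof (intro ballI)
    fix x y assume x: "x \<in> V" and y: "y \<in> V"
    have gx: "g x \<in> V" "g y \<in> V" using bg x y unfolding bij_betw_def by auto
    show "E x y \<longleftrightarrow> E ((f \<circ> g) x) ((f \<circ> g) y)"
    proof -
      have 1: "E x y \<longleftrightarrow> E (g x) (g y)" using g x y unfolding digraph_aut_def by blast
      have 2: "E (g x) (g y) \<longleftrightarrow> E (f (g x)) (f (g y))" using f gx unfolding digraph_aut_def by blast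
      show ?thesis using 1 2 by simp
    qed
  qed
  ultimately show ?thesis unfolding digraph_aut_def by blast
qed

theorem mainTheorem4:
  fixes G :: "'a set" and op :: "'a \<Rightarrow> 'a \<Rightarrow> 'a" and gyr :: "'a \<Rightarrow> 'a \<Rightarrow> 'a \<Rightarrow> 'a"
    and S :: "'a set"
  assumes "gyrogroup G op gyr"
    and "S \<subseteq> G - {gyro_ident G op}"
    and "gyro_symmetric G op S"
    and "\<forall>g\<in>G. \<forall>g'\<in>G. gyr g g' ` S = S"
  shows "vertex_transitive G (rcay_edge G op S)"
proof -
  interpret gg G op gyr using assms(1) by unfold_locales
  have Sg: "S \<subseteq> G" using assms(2) by blast
  show ?thesis unfolding vertex_transitive_def
  proof (intro ballI)
    fix u v assume u: "u \<in> G" and v: "v \<in> G"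
    have iu: "iv u \<in> G" "op (iv u) u = e" using iv_props u by auto
    have "digraph_aut G (rcay_edge G op S) (op v \<circ> op (iv u))"
      using digraph_aut_comp transl_aut[OF v Sg assms(4)] transl_aut[OF iu(1) Sg assms(4)] by blast
    moreover have "(op v \<circ> op (iv u)) u = v" using iu e_props v by simp
    ultimately show "\<exists>f. digraph_aut G (rcay_edge G op S) f \<and> f u = v" by blast
  qed
qed

end
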